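(* For every $X\in\{\mathsf{T},\mathsf{S}\}^*$ and every initial preference formula, $\succ_{X\mathsf{T}}\subseteq\succ_{X\mathsf{T}\mathsf{S}\mathsf{T}}$.
   Context: Fix attribute–taxonomy pairs $A_1{:}T_1,\dots,A_d{:}T_d$ with distinct attribute names, where each taxonomy $T_i=(V_i,\le_{V_i})$ is a poset. A t-tuple over a t-schema $S\subseteq\{A_1{:}T_1,\dots,A_d{:}T_d\}$ maps each $A_i$ in $S$ to a value of $V_i$; $\mathcal{D}$ is the set of all t-tuples over all such t-schemas. A preference relation is a binary relation $\succeq$ on $\mathcal{D}$; its strict part is $t_1\succ t_2$ iff $t_1\succeq t_2$ and not $t_2\succeq t_1$. Preferences are given by a formula $F(x,y)=\bigvee_i P_i(x,y)$, a disjunction of statements; each statement $P_i$ is a disjunction of clauses, each clause a satisfiable conjunction of atoms of the forms $x[A_i]\le_{V_i} v$, $x[A_i]\not\le_{V_i} v$, $y[A_i]\le_{V_i} v$, $y[A_i]\not\le_{V_i} v$; the formula induces $t_1\succeq t_2\iff F(t_1,t_2)$. Operator $\mathsf{T}$ maps a formula to one inducing the transitive closure over $\mathcal{D}$ of the induced relation. Operator $\mathsf{S}$ (specificity-based refinement): repeat rounds; in a round, for each statement $P_i$ let $\mathrm{Impl}(P_i)$ be the set of statements $P_j$ such that $P_j(t_2,t_1)\Rightarrow P_i(t_1,t_2)$ for all $t_1,t_2\in\mathcal{D}$ but not conversely; simultaneously replace every $P_i$ with nonempty $\mathrm{Impl}(P_i)$ by $P_i(x,y)\wedge\bigwedge_{P_j\in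 \mathrm{Impl}(P_i)}\neg P_j(y,x)$; stop when no $\mathrm{Impl}$ set is nonempty. After each operator, contradictory clauses and subsumed statements are removed. For $X\in\{\mathsf{T},\mathsf{S}\}^*$, $\succeq_X$ (strict part $\succ_X$) is the relation induced by applying the operators of $X$ in order to the initial formula. *)

theory Defs
  imports Main
begin

(* Attribute names have type 'a, taxonomy values have type 'v.
   Attrs = {A_1,...,A_d}; V A = value set of taxonomy of A; le A = its order. *)

definition taxonomies :: "'a set \<Rightarrow> ('a \<Rightarrow> 'v set) \<Rightarrow> ('a \<Rightarrow> 'v \<Rightarrow> 'v \<Rightarrow> bool) \<Rightarrow> bool" where
  "taxonomies Attrs V le \<longleftrightarrow> finite Attrs \<and>
     (\<forall>A\<in>Attrs. (\<forall>x\<in>V A. le A x x)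
        \<and> (\<forall>x\<in>V A. \<forall>y\<in>V A. le A x y \<and> le A y x \<longrightarrow> x = y)
        \<and> (\<forall>x\<in>V A. \<forall>y\<in>V A. \<forall>z\<in>V A. le A x y \<longrightarrow> le A y z \<longrightarrow> le A x z))"

type_synonym ('a,'v) ttuple = "'a \<Rightarrow> 'v option"

(* the set D of all t-tuples over all t-schemas S \<subseteq> Attrs *)
definition tuples :: "'a set \<Rightarrow> ('a \<Rightarrow> 'v set) \<Rightarrow> ('a,'v) ttuple set" where
  "tuples Attrs V = {t. dom t \<subseteq> Attrs \<and> (\<forall>A w. t A = Some w \<longrightarrow> w \<in> V A)}"

datatype ('a,'v) atom = XLe 'a 'v | XNLe 'a 'v | YLe 'a 'v | YNLe 'a 'v

type_synonym ('a,'v) clause = "('a,'v) atom list"      (* conjunction of atoms *)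
type_synonym ('a,'v) stmt = "('a,'v) clause list"      (* disjunction of clauses *)
type_synonym ('a,'v) formula = "('a,'v) stmt list"     (* disjunction of statements *)

fun atom_attr :: "('a,'v) atom \<Rightarrow> 'a" where
  "atom_attr (XLe A v) = A" | "atom_attr (XNLe A v) = A"
| "atom_attr (YLe A v) = A" | "atom_attr (YNLe A v) = A"

fun atom_val :: "('a,'v) atom \<Rightarrow> 'v" where
  "atom_val (XLe A v) = v" | "atom_val (XNLe A v) = v"
| "atom_val (YLe A v) = v" | "atom_val (YNLe A v) = v"

fun sem_atom :: "('a \<Rightarrow> 'v \<Rightarrow> 'v \<Rightarrow> bool) \<Rightarrow> ('a,'v) atom \<Rightarrow> ('a,'v) ttuple \<Rightarrow> ('a,'v) ttuple \<Rightarrow> bool" where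
  "sem_atom le (XLe A v) x y = (\<exists>w. x A = Some w \<and> le A w v)"
| "sem_atom le (XNLe A v) x y = (\<not> (\<exists>w. x A = Some w \<and> le A w v))"
| "sem_atom le (YLe A v) x y = (\<exists>w. y A = Some w \<and> le A w v)"
| "sem_atom le (YNLe A v) x y = (\<not> (\<exists>w. y A = Some w \<and> le A w v))"

definition holds_clause where
  "holds_clause le c x y = (\<forall>a\<in>set c. sem_atom le a x y)"

definition holds_stmt where
  "holds_stmt le P x y = (\<exists>c\<in>set P. holds_clause le c x y)"

definition holds_formula where
  "holds_formula le F x y = (\<exists>P\<in>set F. holds_stmt le P x y)"

definition induced :: "'a set \<Rightarrow> ('a \<Rightarrow> 'v set) \<Rightarrow> ('a \<Rightarrow> 'v \<Rightarrow> 'v \<Rightarrow> bool)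
    \<Rightarrow> ('a,'v) formula \<Rightarrow> (('a,'v) ttuple \<times> ('a,'v) ttuple) set" where
  "induced Attrs V le F = {(x,y). x \<in> tuples Attrs V \<and> y \<in> tuples Attrs V \<and> holds_formula le F x y}"

definition strict_part :: "('b \<times> 'b) set \<Rightarrow> ('b \<times> 'b) set" where
  "strict_part R = {(x,y). (x,y) \<in> R \<and> (y,x) \<notin> R}"

definition sat_clause where
  "sat_clause Attrs V le c = (\<exists>x\<in>tuples Attrs V. \<exists>y\<in>tuples Attrs V. holds_clause le c x y)"

definition atoms_ok :: "'a set \<Rightarrow> ('a \<Rightarrow> 'v set) \<Rightarrow> ('a,'v) formula \<Rightarrow> bool" where
  "atoms_ok Attrs V F = (\<forall>P\<in>set F. \<forall>c\<in>set P. \<forall>a\<in>set c.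
      atom_attr a \<in> Attrs \<and> atom_val a \<in> V (atom_attr a))"

definition wf_formula where
  "wf_formula Attrs V le F = (atoms_ok Attrs V F \<and> (\<forall>P\<in>set F. \<forall>c\<in>set P. sat_clause Attrs V le c))"

fun swap_atom :: "('a,'v) atom \<Rightarrow> ('a,'v) atom" where
  "swap_atom (XLe A v) = YLe A v" | "swap_atom (XNLe A v) = YNLe A v"
| "swap_atom (YLe A v) = XLe A v" | "swap_atom (YNLe A v) = XNLe A v"

fun neg_atom :: "('a,'v) atom \<Rightarrow> ('a,'v) atom" where
  "neg_atom (XLe A v) = XNLe A v" | "neg_atom (XNLe A v) = XLe A v"
| "neg_atom (YLe A v) = YNLe A v" | "neg_atom (YNLe A v) = YLe A v"

(* conjunction of two statements, in disjunctive normal form *)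
definition conj_stmt :: "('a,'v) stmt \<Rightarrow> ('a,'v) stmt \<Rightarrow> ('a,'v) stmt" where
  "conj_stmt P Q = concat (map (\<lambda>c. map (\<lambda>d. c @ d) Q) P)"

(* DNF of  \<not> P(y,x) *)
definition neg_swap_stmt :: "('a,'v) stmt \<Rightarrow> ('a,'v) stmt" where
  "neg_swap_stmt P = foldr (\<lambda>c acc. conj_stmt (map (\<lambda>a. [neg_atom (swap_atom a)]) c) acc) P [[]]"

definition stmt_imp where
  "stmt_imp Attrs V le P Q = (\<forall>x\<in>tuples Attrs V. \<forall>y\<in>tuples Attrs V.
      holds_stmt le P x y \<longrightarrow> holds_stmt le Q x y)"

definition in_impl where
  "in_impl Attrs V le Pi Pj =
     ((\<forall>x\<in>tuples Attrs V. \<forall>y\<in>tuples Attrs V. holds_stmt le Pj y x \<longrightarrow> holds_stmt le Pi x y)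
      \<and> \<not> (\<forall>x\<in>tuples Attrs V. \<forall>y\<in>tuples Attrs V. holds_stmt le Pi x y \<longrightarrow> holds_stmt le Pj y x))"

definition impl_list where
  "impl_list Attrs V le F Pi = filter (in_impl Attrs V le Pi) F"

definition refine_stmt :: "('a,'v) stmt \<Rightarrow> ('a,'v) stmt list \<Rightarrow> ('a,'v) stmt" where
  "refine_stmt P Js = foldl (\<lambda>acc Pj. conj_stmt acc (neg_swap_stmt Pj)) P Js"

(* one round of S: simultaneous replacement *)
definition s_round where
  "s_round Attrs V le F =
     map (\<lambda>P. if impl_list Attrs V le F P = [] then P else refine_stmt P (impl_list Attrs V le F P)) F"

definition s_stable where
  "s_stable Attrs V le F = (\<forall>P\<in>set F. impl_list Attrs V le F P = [])"

definition clean_clauses where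
  "clean_clauses Attrs V le F = map (filter (sat_clause Attrs V le)) F"

definition remove_subsumed where
  "remove_subsumed Attrs V le F =
     map (\<lambda>i. F ! i)
       (filter (\<lambda>i. \<not> (\<exists>k<length F. stmt_imp Attrs V le (F ! i) (F ! k)
                     \<and> (\<not> stmt_imp Attrs V le (F ! k) (F ! i) \<or> k < i)))
          [0..<length F])"

definition cleanup where
  "cleanup Attrs V le F = remove_subsumed Attrs V le (clean_clauses Attrs V le F)"

definition T_step where
  "T_step Attrs V le F G = (\<exists>H. atoms_ok Attrs V H
      \<and> induced Attrs V le H = trancl (induced Attrs V le F)
      \<and> G = cleanup Attrs V le H)"

definition S_step where
  "S_step Attrs V le F G = (\<exists>n. s_stable Attrs V le ((s_round Attrs V le ^^ n) F)
      \<and> G = cleanup Attrs V le ((s_round Attrs V le ^^ n) F))"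

datatype op = OpT | OpS

fun op_step where
  "op_step Attrs V le OpT F G = T_step Attrs V le F G"
| "op_step Attrs V le OpS F G = S_step Attrs V le F G"

inductive apply_ops for Attrs V le where
  ao_nil: "apply_ops Attrs V le [] F F"
| ao_snoc: "apply_ops Attrs V le X F G \<Longrightarrow> op_step Attrs V le p G H \<Longrightarrow> apply_ops Attrs V le (X @ [p]) F H"

end

theory Submission
  imports Defs
begin

lemma holds_clause_app[simp]: "holds_clause le (c @ d) x y = (holds_clause le c x y \<and> holds_clause le d x y)"
  unfolding holds_clause_def by auto

lemma holds_conj[simp]: "holds_stmt le (conj_stmt P Q) x y = (holds_stmt le P x y \<and> holds_stmt le Q x y)"
  unfolding holds_stmt_def conj_stmt_def by auto

lemma sem_neg_swap[simp]: "sem_atom le (neg_atom (swap_atom a)) x y = (\<not> sem_atom le a y x)"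
  by (cases a) auto

lemma holds_clause_neg: "holds_stmt le (map (\<lambda>a. [neg_atom (swap_atom a)]) c) x y = (\<not> holds_clause le c y x)"
  unfolding holds_stmt_def holds_clause_def by auto

lemma holds_neg_swap[simp]: "holds_stmt le (neg_swap_stmt P) x y = (\<not> holds_stmt le P y x)"
proof (induction P)
  case Nil
  then show ?case by (simp add: neg_swap_stmt_def holds_stmt_def holds_clause_def)
next
  case (Cons c P)
  have "neg_swap_stmt (c # P) = conj_stmt (map (\<lambda>a. [neg_atom (swap_atom a)]) c) (neg_swap_stmt P)"
    by (simp add: neg_swap_stmt_def)
  then show ?case using Cons by (simp only: holds_conj holds_clause_neg) (simp add: holds_stmt_def)
qed

lemma holds_refine: "holds_stmt le (refine_stmt P Js) x y = (holds_stmt le P x y \<and> (\<forall>Pj\<in>set Js. \<not> holds_stmt le Pj y x))"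
  unfolding refine_stmt_def by (induction Js arbitrary: P) auto

lemma clean_ok:
  assumes "x \<in> tuples Attrs V" "y \<in> tuples Attrs V"
  shows "holds_formula le (clean_clauses Attrs V le F) x y = holds_formula le F x y"
  using assms unfolding holds_formula_def clean_clauses_def holds_stmt_def sat_clause_def by auto

lemma remove_kept:
  fixes F :: "('a,'v) formula" and Attrs :: "'a set" and V :: "'a \<Rightarrow> 'v set" and le :: "'a \<Rightarrow> 'v \<Rightarrow> 'v \<Rightarrow> bool"
  defines "r \<equiv> \<lambda>i k. stmt_imp Attrs V le (F ! i) (F ! k)"
  defines "rem \<equiv> \<lambda>i. \<exists>k<length F. r i k \<and> (\<not> r k i \<or> k < i)"
  assumes "i < length F"
  shows "\<exists>j<length F. \<not> rem j \<and> r i j"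
proof -
  have refl: "\<And>i. r i i" unfolding r_def stmt_imp_def by auto
  have tr: "\<And>a b c. r a b \<Longrightarrow> r b c \<Longrightarrow> r a c" unfolding r_def stmt_imp_def by blast
  define ab where "ab = (\<lambda>i. {j. j < length F \<and> r i j \<and> \<not> r j i})"
  define R where "R = inv_image (less_than <*lex*> less_than) (\<lambda>i. (card (ab i), i))"
  have wfR: "wf R" unfolding R_def by auto
  show ?thesis using assms(3)
  proof (induction i rule: wf_induct_rule[OF wfR])
    case (1 i)
    show ?case
    proof (cases "rem i")
      case False then show ?thesis using 1(2) refl by blast
    next
      case True
      then obtain k where k: "k < length F" "r i k" "\<not> r k i \<or> k < i" unfolding rem_def by blast
      have "(k, i) \<in> R"
      proof (cases "r k i")
        case False
        have sub: "ab k \<subseteq> ab i" unfolding ab_def using tr k(2) False by blast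
        have "k \<in> ab i" "k \<notin> ab k" unfolding ab_def using k False refl by auto
        hence "ab k \<subset> ab i" using sub by blast
        hence "card (ab k) < card (ab i)" by (rule psubset_card_mono[rotated]) (simp add: ab_def)
        then show ?thesis unfolding R_def by simp
      next
        case True
        have "ab k = ab i" unfolding ab_def using tr k(2) True by blast
        then show ?thesis unfolding R_def using k(3) True by simp
      qed
      from 1(1)[OF this k(1)] obtain j where "j<length F" "\<not> rem j" "r k j" by blast
      then show ?thesis using tr k(2) by blast
    qed
  qed
qed

lemma remove_ok:
  assumes "x \<in> tuples Attrs V" "y \<in> tuples Attrs V"
  shows "holds_formula le (remove_subsumed Attrs V le F) x y = holds_formula le F x y"
proof
  assume "holds_formula le (remove_subsumed Attrs V le F) x y"
  then show "holds_formula le F x y"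
    unfolding holds_formula_def remove_subsumed_def by auto
next
  assume "holds_formula le F x y"
  then obtain i where i: "i < length F" "holds_stmt le (F ! i) x y"
    unfolding holds_formula_def by (metis in_set_conv_nth)
  from remove_kept[OF i(1), of Attrs V le] obtain j where
    j: "j < length F" "\<not> (\<exists>k<length F. stmt_imp Attrs V le (F ! j) (F ! k) \<and> (\<not> stmt_imp Attrs V le (F ! k) (F ! j) \<or> k < j))"
       "stmt_imp Attrs V le (F ! i) (F ! j)" by blast
  have "holds_stmt le (F ! j) x y" using j(3) i(2) assms unfolding stmt_imp_def by blast
  moreover have "F ! j \<in> set (remove_subsumed Attrs V le F)"
    unfolding remove_subsumed_def using j(1,2) by auto
  ultimately show "holds_formula le (remove_subsumed Attrs V le F) x y"
    unfolding holds_formula_def by blast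
qed

lemma induced_cleanup: "induced Attrs V le (cleanup Attrs V le F) = induced Attrs V le F"
  unfolding induced_def cleanup_def using remove_ok clean_ok by fastforce

lemma T_step_induced: "T_step Attrs V le F G \<Longrightarrow> induced Attrs V le G = trancl (induced Attrs V le F)"
  unfolding T_step_def using induced_cleanup by metis

lemma s_inv:
  fixes G :: "('a,'v) formula" and Attrs :: "'a set" and V :: "'a \<Rightarrow> 'v set" and le :: "'a \<Rightarrow> 'v \<Rightarrow> 'v \<Rightarrow> bool"
  defines "R \<equiv> induced Attrs V le G"
  shows "(\<forall>P\<in>set ((s_round Attrs V le ^^ n) G). \<forall>x\<in>tuples Attrs V. \<forall>y\<in>tuples Attrs V.
            holds_stmt le P x y \<longrightarrow> (x,y) \<in> R)
       \<and> (\<forall>(x,y)\<in>strict_part R. holds_formula le ((s_round Attrs V le ^^ n) G) x y)"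
proof (induction n)
  case 0
  then show ?case unfolding R_def induced_def strict_part_def holds_formula_def by auto
next
  case (Suc n)
  define F where "F = (s_round Attrs V le ^^ n) G"
  have a: "\<forall>P\<in>set F. \<forall>x\<in>tuples Attrs V. \<forall>y\<in>tuples Attrs V. holds_stmt le P x y \<longrightarrow> (x,y) \<in> R"
   and b: "\<forall>(x,y)\<in>strict_part R. holds_formula le F x y" using Suc F_def by auto
  have eq: "(s_round Attrs V le ^^ Suc n) G = s_round Attrs V le F" by (simp add: F_def)
  have imp: "\<And>P x y. holds_stmt le (if impl_list Attrs V le F P = [] then P else refine_stmt P (impl_list Attrs V le F P)) x y
        \<Longrightarrow> holds_stmt le P x y" by (auto simp: holds_refine split: if_splits)
  have A: "\<forall>P\<in>set (s_round Attrs V le F). \<forall>x\<in>tuples Attrs V. \<forall>y\<in>tuples Attrs V. holds_stmt le P x y \<longrightarrow> (x,y) \<in> R"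
  proof (intro ballI impI)
    fix P' x y assume P': "P' \<in> set (s_round Attrs V le F)" and xy: "x \<in> tuples Attrs V" "y \<in> tuples Attrs V"
      and h: "holds_stmt le P' x y"
    from P' obtain P where P: "P \<in> set F" "P' = (if impl_list Attrs V le F P = [] then P else refine_stmt P (impl_list Attrs V le F P))"
      unfolding s_round_def by auto
    have "holds_stmt le P x y" using imp h P(2) by blast
    then show "(x,y) \<in> R" using a P(1) xy by blast
  qed
  have B: "\<forall>(x,y)\<in>strict_part R. holds_formula le (s_round Attrs V le F) x y"
  proof (clarify)
    fix x y assume st: "(x,y) \<in> strict_part R"
    then obtain P where P: "P \<in> set F" "holds_stmt le P x y" using b unfolding holds_formula_def by blast
    have xy: "x \<in> tuples Attrs V" "y \<in> tuples Attrs V" "(y,x) \<notin> R"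
      using st unfolding strict_part_def R_def induced_def by auto
    have "\<forall>Pj\<in>set (impl_list Attrs V le F P). \<not> holds_stmt le Pj y x"
      using a xy unfolding impl_list_def by auto
    hence "holds_stmt le (if impl_list Attrs V le F P = [] then P else refine_stmt P (impl_list Attrs V le F P)) x y"
      using P(2) by (simp add: holds_refine)
    moreover have "(if impl_list Attrs V le F P = [] then P else refine_stmt P (impl_list Attrs V le F P)) \<in> set (s_round Attrs V le F)"
      unfolding s_round_def set_map using P(1) by (rule imageI)
    ultimately show "holds_formula le (s_round Attrs V le F) x y"
      unfolding holds_formula_def by blast
  qed
  show ?case using A B eq by simp
qed

theorem mainTheorem4:
  fixes Attrs :: "'a set" and V :: "'a \<Rightarrow> 'v set" and le :: "'a \<Rightarrow> 'v \<Rightarrow> 'v \<Rightarrow> bool"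
    and X :: "op list" and F0 G0 G1 G2 G3 :: "('a,'v) formula"
  assumes "taxonomies Attrs V le"
    and "wf_formula Attrs V le F0"
    and "apply_ops Attrs V le X F0 G0"
    and "T_step Attrs V le G0 G1"
    and "S_step Attrs V le G1 G2"
    and "T_step Attrs V le G2 G3"
  shows "strict_part (induced Attrs V le G1) \<subseteq> strict_part (induced Attrs V le G3)"
proof
  define R where "R = induced Attrs V le G1"
  have trR: "trans R" unfolding R_def using T_step_induced[OF assms(4)] by simp
  obtain n where n: "G2 = cleanup Attrs V le ((s_round Attrs V le ^^ n) G1)"
    using assms(5) unfolding S_step_def by blast
  define F where "F = (s_round Attrs V le ^^ n) G1"
  have R2: "induced Attrs V le G2 = induced Attrs V le F" using n F_def induced_cleanup by metis
  have R3: "induced Attrs V le G3 = trancl (induced Attrs V le F)"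
    using T_step_induced[OF assms(6)] R2 by simp
  note ab = s_inv[where G=G1 and n=n and Attrs=Attrs and V=V and le=le, folded F_def R_def]
  have a: "\<forall>P\<in>set F. \<forall>x\<in>tuples Attrs V. \<forall>y\<in>tuples Attrs V. holds_stmt le P x y \<longrightarrow> (x,y) \<in> R"
    using ab by (rule conjunct1)
  have b: "\<forall>(x,y)\<in>strict_part R. holds_formula le F x y" using ab by (rule conjunct2)
  have sub: "induced Attrs V le F \<subseteq> R" using a unfolding induced_def holds_formula_def by auto
  have "(induced Attrs V le F)\<^sup>+ \<subseteq> R\<^sup>+" using sub by (auto intro: trancl_mono)
  hence sub3: "induced Attrs V le G3 \<subseteq> R" unfolding R3 using trancl_id[OF trR] by simp
  fix p assume p: "p \<in> strict_part (induced Attrs V le G1)"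
  obtain x y where xy: "p = (x,y)" by (cases p)
  have st: "(x,y) \<in> strict_part R" using p xy R_def by simp
  have "x \<in> tuples Attrs V" "y \<in> tuples Attrs V" "(y,x) \<notin> R"
    using st unfolding strict_part_def R_def induced_def by auto
  moreover have "holds_formula le F x y" using b st by auto
  ultimately have "(x,y) \<in> induced Attrs V le F" unfolding induced_def by auto
  hence "(x,y) \<in> induced Attrs V le G3" unfolding R3 by (rule r_into_trancl)
  moreover have "(y,x) \<notin> induced Attrs V le G3" using sub3 \<open>(y,x) \<notin> R\<close> by auto
  ultimately show "p \<in> strict_part (induced Attrs V le G3)" unfolding strict_part_def xy by auto
qed

end
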